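(* Let $C,D\subseteq[n]\times[n]$ be diagrams and $k,l\in[n]$. If $\widehat{C}\le\widehat{D}$, then $\widehat{C}_{\mathrm{aug}}\le D$. In particular, every diagram $C'\le\widehat{D}$ with no boxes in row $k$ can be obtained from some diagram $C\le D$ by removing any boxes in row $k$ or column $l$ from $C$.
   Context: A diagram $D\subseteq[n]\times[n]$ is a set of boxes $(i,j)$ (row $i$, column $j$), identified with its column sequence $(D_1,\dots,D_n)$, $D_j=\{i:(i,j)\in D\}$. For $R,S\subseteq[n]$, $R\le S$ means $\#R=\#S$ and the $k$-th smallest element of $R$ is at most the $k$-th smallest element of $S$ for each $k$; for diagrams $C\le D$ means $C_j\le D_j$ for all $j$. For fixed $k,l$, $\widehat{C}$ and $\widehat{D}$ denote the diagrams obtained from $C$ and $D$ by removing all boxes in row $k$ or column $l$. For a diagram $\widehat{C}$ (with $D$ fixed), $\widehat{C}_{\mathrm{aug}}=\widehat{C}\cup\{(k,i):(k,i)\in D\}\cup\{(i,l):(i,l)\in D\}$. *)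

theory Defs
  imports Main
begin

type_synonym diagram = "(nat \<times> nat) set"

text \<open>A diagram in [n] x [n]; a box (i,j) is in row i, column j.\<close>
definition is_diagram :: "nat \<Rightarrow> diagram \<Rightarrow> bool" where
  "is_diagram n D \<longleftrightarrow> D \<subseteq> {1..n} \<times> {1..n}"

definition col :: "diagram \<Rightarrow> nat \<Rightarrow> nat set" where
  "col D j = {i. (i, j) \<in> D}"

definition set_le :: "nat set \<Rightarrow> nat set \<Rightarrow> bool" where
  "set_le R S \<longleftrightarrow> card R = card S \<and>
     (\<forall>m < card R. sorted_list_of_set R ! m \<le> sorted_list_of_set S ! m)"

definition diag_le :: "diagram \<Rightarrow> diagram \<Rightarrow> bool" where
  "diag_le C D \<longleftrightarrow> (\<forall>j. set_le (col C j) (col D j))"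

definition hat :: "nat \<Rightarrow> nat \<Rightarrow> diagram \<Rightarrow> diagram" where
  "hat k l D = {(i, j) \<in> D. i \<noteq> k \<and> j \<noteq> l}"

definition aug :: "nat \<Rightarrow> nat \<Rightarrow> diagram \<Rightarrow> diagram \<Rightarrow> diagram" where
  "aug k l D C = C \<union> {(k, i) | i. (k, i) \<in> D} \<union> {(i, l) | i. (i, l) \<in> D}"

end

theory Submission
  imports Defs
begin

lemma nth_le_iff_filter:
  assumes "sorted xs" "m < length xs"
  shows "(xs ! m \<le> (t::nat)) \<longleftrightarrow> m < length (filter (\<lambda>x. x \<le> t) xs)"
  using assms
proof (induction xs arbitrary: m)
  case Nil then show ?case by simp
next
  case (Cons x ys)
  show ?case
  proof (cases "x \<le> t")
    case True
    then show ?thesis using Cons by (cases m) auto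
  next
    case False
    have f: "filter (\<lambda>x. x \<le> t) ys = []" using Cons.prems False
      by (auto simp: filter_empty_conv)
    show ?thesis
    proof (cases m)
      case 0 then show ?thesis using False f by simp
    next
      case (Suc m')
      have "ys ! m' \<in> set ys" using Cons.prems Suc by simp
      then have "x \<le> ys ! m'" using Cons.prems by simp
      then show ?thesis using False f Suc by simp
    qed
  qed
qed

definition cnt :: "nat set \<Rightarrow> nat \<Rightarrow> nat" where
  "cnt R t = card {r\<in>R. r \<le> t}"

lemma cnt_filter:
  assumes "finite R"
  shows "length (filter (\<lambda>x. x \<le> t) (sorted_list_of_set R)) = cnt R t"
proof -
  have "length (filter (\<lambda>x. x \<le> t) (sorted_list_of_set R))
      = card ({x. x \<le> t} \<inter> set (sorted_list_of_set R))"
    by (rule distinct_length_filter) simp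
  also have "\<dots> = cnt R t" using assms unfolding cnt_def
    by (simp add: Int_commute Collect_conj_eq)
  finally show ?thesis .
qed

lemma key:
  assumes "finite R" "m < card R"
  shows "(sorted_list_of_set R ! m \<le> t) \<longleftrightarrow> m < cnt R t"
  using nth_le_iff_filter[of "sorted_list_of_set R" m t] assms cnt_filter[OF assms(1)]
  by simp

lemma set_le_iff:
  assumes "finite R" "finite S"
  shows "set_le R S \<longleftrightarrow> card R = card S \<and> (\<forall>t. cnt S t \<le> cnt R t)"
proof
  assume a: "set_le R S"
  have c: "card R = card S" using a unfolding set_le_def by simp
  have "cnt S t \<le> cnt R t" for t
  proof (cases "cnt S t = 0")
    case False
    have "cnt S t \<le> card S" unfolding cnt_def using assms(2)
      by (intro card_mono) auto
    then have m: "cnt S t - 1 < card S" using False by simp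
    then have "sorted_list_of_set S ! (cnt S t - 1) \<le> t"
      using key[OF assms(2) m] False by simp
    moreover have "sorted_list_of_set R ! (cnt S t - 1) \<le> sorted_list_of_set S ! (cnt S t - 1)"
      using a m c unfolding set_le_def by simp
    ultimately have "sorted_list_of_set R ! (cnt S t - 1) \<le> t" by simp
    then have "cnt S t - 1 < cnt R t" using key[OF assms(1)] m c by simp
    then show ?thesis by simp
  qed simp
  then show "card R = card S \<and> (\<forall>t. cnt S t \<le> cnt R t)" using c by simp
next
  assume a: "card R = card S \<and> (\<forall>t. cnt S t \<le> cnt R t)"
  show "set_le R S" unfolding set_le_def
  proof (intro conjI allI impI)
    show "card R = card S" using a by simp
    fix m assume m: "m < card R"
    let ?s = "sorted_list_of_set S ! m"
    have "m < cnt S ?s" using key[OF assms(2), of m ?s] m a by simp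
    then have "m < cnt R ?s" using a by (meson order_less_le_trans)
    then show "sorted_list_of_set R ! m \<le> ?s" using key[OF assms(1) m] by simp
  qed
qed

lemma cnt_union:
  assumes "finite R" "k \<notin> R" "A \<subseteq> {k}"
  shows "cnt (R \<union> A) t = cnt R t + (if k \<in> A \<and> k \<le> t then 1 else 0)"
proof (cases "A = {}")
  case True then show ?thesis using assms by auto
next
  case False
  then have A: "A = {k}" using assms by auto
  show ?thesis
  proof (cases "k \<le> t")
    case True
    have "{r \<in> R \<union> A. r \<le> t} = insert k {r\<in>R. r \<le> t}" using A True by auto
    then show ?thesis unfolding cnt_def using assms A True by simp
  next
    case False
    have "{r \<in> R \<union> A. r \<le> t} = {r\<in>R. r \<le> t}" using A False by auto
    then show ?thesis unfolding cnt_def using A False by simp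
  qed
qed

lemma set_le_union:
  assumes "finite R" "finite S" "k \<notin> R" "k \<notin> S" "A \<subseteq> {k}" "set_le R S"
  shows "set_le (R \<union> A) (S \<union> A)"
proof -
  have fA: "finite A" using assms(5) finite_subset by blast
  have c: "card R = card S" "\<forall>t. cnt S t \<le> cnt R t"
    using assms(6) set_le_iff[OF assms(1,2)] by auto
  have "card (R \<union> A) = card S + card A"
    using card_Un_disjoint[OF assms(1) fA] assms c by auto
  moreover have "card (S \<union> A) = card S + card A"
    using card_Un_disjoint[OF assms(2) fA] assms by auto
  moreover have "\<forall>t. cnt (S \<union> A) t \<le> cnt (R \<union> A) t"
    using cnt_union[OF assms(1,3,5)] cnt_union[OF assms(2,4,5)] c by simp
  ultimately show ?thesis using set_le_iff assms fA by simp
qed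

lemma finite_col: "finite X \<Longrightarrow> finite (col X j)"
proof -
  assume "finite X"
  moreover have "col X j \<subseteq> fst ` X" unfolding col_def by force
  ultimately show ?thesis using finite_subset by blast
qed

lemma finite_hat: "finite X \<Longrightarrow> finite (hat k l X)"
proof -
  assume "finite X"
  moreover have "hat k l X \<subseteq> X" unfolding hat_def by auto
  ultimately show ?thesis using finite_subset by blast
qed

lemma set_le_empty: "finite S \<Longrightarrow> set_le {} S \<Longrightarrow> S = {}"
  unfolding set_le_def by simp

lemma main:
  assumes fX: "finite X" and fD: "finite D"
    and nk: "\<forall>j. (k, j) \<notin> X" and nl: "\<forall>i. (i, l) \<notin> X"
    and le: "diag_le X (hat k l D)"
  shows "diag_le (aug k l D X) D"
  unfolding diag_le_def
proof
  fix j
  show "set_le (col (aug k l D X) j) (col D j)"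
  proof (cases "j = l")
    case True
    have "col (aug k l D X) j = col D j"
      using True nl unfolding col_def aug_def by auto
    then show ?thesis unfolding set_le_def by simp
  next
    case False
    let ?A = "if (k, j) \<in> D then {k} else {}"
    have e1: "col (aug k l D X) j = col X j \<union> ?A"
      using False unfolding col_def aug_def by auto
    have e2: "col D j = col (hat k l D) j \<union> ?A"
      using False unfolding col_def hat_def by auto
    have fh: "finite (hat k l D)" using finite_hat[OF fD] .
    have "set_le (col X j \<union> ?A) (col (hat k l D) j \<union> ?A)"
      apply (rule set_le_union[where k=k])
      using finite_col[OF fX] finite_col[OF fh] nk le
      unfolding diag_le_def by (auto simp: col_def hat_def)
    then show ?thesis using e1 e2 by simp
  qed
qed

lemma diagram_finite: "is_diagram n X \<Longrightarrow> finite X"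
  unfolding is_diagram_def using finite_subset by blast

theorem lemma5p6:
  fixes n k l :: nat and C D :: diagram
  assumes "is_diagram n C" and "is_diagram n D"
    and "k \<in> {1..n}" and "l \<in> {1..n}"
  shows "(diag_le (hat k l C) (hat k l D) \<longrightarrow> diag_le (aug k l D (hat k l C)) D)
    \<and> (\<forall>C'. is_diagram n C' \<and> diag_le C' (hat k l D) \<and> (\<forall>j. (k, j) \<notin> C')
          \<longrightarrow> (\<exists>C0. is_diagram n C0 \<and> diag_le C0 D \<and> hat k l C0 = C'))"
proof (intro conjI impI allI)
  have fC: "finite C" and fD: "finite D" using assms diagram_finite by auto
  show "diag_le (aug k l D (hat k l C)) D" if "diag_le (hat k l C) (hat k l D)"
    using main[OF finite_hat[OF fC] fD _ _ that] unfolding hat_def by auto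
next
  fix C' assume a: "is_diagram n C' \<and> diag_le C' (hat k l D) \<and> (\<forall>j. (k, j) \<notin> C')"
  have fC': "finite C'" using a diagram_finite by auto
  have fD: "finite D" using assms diagram_finite by auto
  have fh: "finite (hat k l D)" using finite_hat[OF fD] .
  have "col (hat k l D) l = {}" unfolding col_def hat_def by auto
  then have "col C' l = {}" using a set_le_empty[of "col C' l"] finite_col[OF fC']
    unfolding diag_le_def set_le_def by (metis card_0_eq card.empty)
  then have nl: "\<forall>i. (i, l) \<notin> C'" unfolding col_def by auto
  show "\<exists>C0. is_diagram n C0 \<and> diag_le C0 D \<and> hat k l C0 = C'"
  proof (intro exI conjI)
    show "is_diagram n (aug k l D C')" using a assms(2)
      unfolding is_diagram_def aug_def by auto
    show "diag_le (aug k l D C') D" using main[OF fC' fD _ nl] a by auto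
    show "hat k l (aug k l D C') = C'" using a nl unfolding hat_def aug_def by auto
  qed
qed

end
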